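(* Let $n\ge 2$ be an integer. Then $$\binom{n^3-\lfloor\frac{(n-1)^3+1}{2}\rfloor}{3n^2-3n+1}+\binom{n^3-\lfloor\frac{(n-1)^3+2}{2}\rfloor}{3n^2-3n+1}< \frac{1}{n^3}\binom{n^3+6n^2-6n+2}{n^3-1}.$$ *)

theory Defs
  imports Complex_Main
begin

end

theory Submission
  imports Defs
begin

lemma step_choose:
  fixes x K :: nat
  shows "real ((x + 1 + K) choose K) * real (x + 1) = real ((x + K) choose K) * real (x + 1 + K)"
proof -
  have a: "(x + 1 + K) choose K = (x + 1 + K) choose (x+1)"
    using binomial_symmetric[of K "x+1+K"] by simp
  have b: "(x + K) choose K = (x + K) choose x"
    using binomial_symmetric[of K "x+K"] by simp
  have c: "((x + 1 + K) choose (x+1)) * (x+1) = ((x + K) choose x) * (x + 1 + K)"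
  proof -
    have h: "Suc (x + K) * ((x + K) choose x) = (Suc (x + K) choose Suc x) * Suc x"
      by (rule Suc_times_binomial_eq)
    have s1: "Suc (x + K) = x + 1 + K" and s2: "Suc x = x + 1" by simp_all
    have h2: "(x + 1 + K) * ((x + K) choose x) = ((x + 1 + K) choose (x + 1)) * (x + 1)"
      using h unfolding s1 s2 .
    have h3: "((x + K) choose x) * (x + 1 + K) = (x + 1 + K) * ((x + K) choose x)"
      by (rule mult.commute)
    show ?thesis by (simp only: h3 h2)
  qed
  have e: "((x + 1 + K) choose K) * (x + 1) = ((x + K) choose K) * (x + 1 + K)"
    unfolding a b by (rule c)
  show ?thesis unfolding of_nat_mult[symmetric] e by (rule refl)
qed

lemma growth:
  fixes m K D :: nat
  assumes "d \<le> D"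
  shows "real ((m + d + K) choose K) \<ge> real ((m + K) choose K) * (1 + real K / real (m + D)) ^ d"
  using assms
proof (induction d)
  case 0 then show ?case by simp
next
  case (Suc d)
  let ?x = "m + d"
  have IH: "real ((m + d + K) choose K) \<ge> real ((m + K) choose K) * (1 + real K / real (m + D)) ^ d"
    using Suc by simp
  have pos: "real (?x + 1) > 0" by simp
  have fac: "real (?x + 1 + K) / real (?x + 1) \<ge> 1 + real K / real (m + D)"
  proof -
    have le: "real (?x + 1) \<le> real (m + D)" using Suc.prems by simp
    have "real K / real (m + D) \<le> real K / real (?x + 1)"
      by (rule divide_left_mono) (use le pos in auto)
    moreover have "real (?x + 1 + K) / real (?x + 1) = 1 + real K / real (?x + 1)"
      using pos by (simp add: field_simps)
    ultimately show ?thesis by simp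
  qed
  have eq: "real ((?x + 1 + K) choose K) = real ((?x + K) choose K) * (real (?x + 1 + K) / real (?x + 1))"
    using step_choose[of ?x K] pos by (simp add: field_simps)
  have "real ((m + K) choose K) * (1 + real K / real (m + D)) ^ Suc d
      = (real ((m + K) choose K) * (1 + real K / real (m + D)) ^ d) * (1 + real K / real (m + D))"
    by simp
  also have "\<dots> \<le> real ((?x + K) choose K) * (real (?x + 1 + K) / real (?x + 1))"
    by (rule mult_mono) (use IH fac in auto)
  finally show ?case using eq by (simp add: add.assoc)
qed

lemma vand2:
  fixes a b m :: nat
  assumes "m \<ge> 1"
  shows "(a choose m) + (b choose m) \<le> (a + b) choose m"
proof -
  have "(a + b) choose m = (\<Sum>k\<le>m. (a choose k) * (b choose (m - k)))"
    by (rule vandermonde[symmetric])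
  also have "\<dots> \<ge> (\<Sum>k\<in>{0, m}. (a choose k) * (b choose (m - k)))"
    by (rule sum_mono2) auto
  moreover have "(\<Sum>k\<in>{0, m}. (a choose k) * (b choose (m - k))) = (a choose m) + (b choose m)"
    using assms by simp
  ultimately show ?thesis by simp
qed

theorem proposition3:
  fixes n :: nat
  assumes "n \<ge> 2"
  shows "real ((n^3 - ((n-1)^3 + 1) div 2) choose (3*n^2 - 3*n + 1))
       + real ((n^3 - ((n-1)^3 + 2) div 2) choose (3*n^2 - 3*n + 1))
       < (1 / real n ^ 3) * real ((n^3 + 6*n^2 - 6*n + 2) choose (n^3 - 1))"
proof (cases "n = 2")
  case True
  show ?thesis
  proof -
  have c: "(real 22 / real 7)^7 \<le> real ((22::nat) choose 7)"
    by (rule binomial_ge_n_over_k_pow_k) (simp only: numeral_le_iff semiring_norm)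
  have d0: "(3::real)^7 \<le> (real 22 / real 7)^7" by (rule power_mono) simp_all
  have d: "(real 22 / real 7)^7 > (16::real)" using d0 by simp
  have e1: "(2::nat)^3 + 6*2^2 - 6*2 + 2 = 22" "(2::nat)^3 - 1 = 7" by simp_all
  have e2: "(2::nat)^3 - ((2-1)^3 + 1) div 2 = 7" "(2::nat)^3 - ((2-1)^3 + 2) div 2 = 7" "(3::nat)*2^2 - 3*2 + 1 = 7" by simp_all
  have f: "real ((7::nat) choose 7) = 1" by (simp only: binomial_n_n of_nat_1)
  have g: "(1 / real (2::nat) ^ 3) = (1/8::real)" by simp
  show ?thesis unfolding True e1 e2 f g using c d by linarith
  qed
next
  case False
  hence n3: "n \<ge> 3" using assms by simp
  obtain p where p: "n = Suc p" using assms by (cases n) auto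
  define k where "k = (n-1)^3"
  define N where "N = n^3"
  define m where "m = 3*n^2 - 3*n + 1"
  define K where "K = N - 1"
  have kp: "k = p^3" unfolding k_def p by simp
  have Nk: "N = k + m"
    unfolding N_def kp m_def p by (simp add: power3_eq_cube power2_eq_square algebra_simps)
  have m1: "m \<ge> 1" unfolding m_def by simp
  have N27: "N \<ge> 27"
  proof -
    have "3^3 \<le> n^3" by (rule power_mono) (use n3 in auto)
    thus ?thesis unfolding N_def by simp
  qed
  have NK: "N = K + 1" unfolding K_def using N27 by simp
  have ab: "(N - (k + 1) div 2) + (N - (k + 2) div 2) = m + K"
  proof -
    have h1: "(k + 1) div 2 + (k + 2) div 2 = k + 1" by presburger
    have h2: "(k + 2) div 2 \<le> k + 1" by presburger
    have h3: "(k + 1) div 2 \<le> k + 1" by presburger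
    show ?thesis using h1 h2 h3 Nk NK m1 by linarith
  qed
  have m_p: "m = 3*p^2+3*p+1" unfolding m_def p by (simp add: power2_eq_square algebra_simps)
  have modd: "odd m"
  proof -
    have "even (p * (p + 1))" by simp
    hence "even (3*p^2+3*p)" by (simp add: power2_eq_square algebra_simps)
    thus ?thesis unfolding m_p by simp
  qed
  have rhs_arg: "n^3 + 6*n^2 - 6*n + 2 = 2*m + 1 + K"
  proof -
    have "6*n^2 - 6*n + 2 = 2*m" unfolding m_p p by (simp add: power2_eq_square algebra_simps)
    moreover have "n^3 = K + 1" using NK N_def by simp
    moreover have le6: "6*n \<le> 6*n^2" by (simp add: power2_eq_square)
    moreover have "n^3 + 6*n^2 - 6*n + 2 = n^3 + (6*n^2 - 6*n + 2)" using le6 by simp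
    ultimately show ?thesis by simp
  qed
  have L: "real ((N - (k + 1) div 2) choose m) + real ((N - (k + 2) div 2) choose m)
      \<le> real ((m + K) choose K)"
  proof -
    have "((N - (k + 1) div 2) choose m) + ((N - (k + 2) div 2) choose m) \<le> (m + K) choose m"
      using vand2[OF m1, of "N - (k + 1) div 2" "N - (k + 2) div 2"] ab by simp
    also have "(m + K) choose m = (m + K) choose K"
      using binomial_symmetric[of m "m+K"] by simp
    finally show ?thesis by (simp only: of_nat_add[symmetric] of_nat_le_iff)
  qed
  define t where "t = real K / real (2*m + 1)"
  have t0: "t \<ge> 0" unfolding t_def by simp
  have G: "real ((2*m + 1 + K) choose K) \<ge> real ((m + K) choose K) * (1 + t) ^ (m + 1)"
  proof -
    have g: "real ((m + (m+1) + K) choose K) \<ge> real ((m + K) choose K) * (1 + real K / real (m + (m+1))) ^ (m+1)"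
      by (rule growth) simp
    have e1: "m + (m+1) + K = 2*m+1+K" and e2: "m + (m+1) = 2*m+1" by simp_all
    show ?thesis using g by (simp only: e1 e2 t_def)
  qed
  define j where "j = (m + 1) div 2"
  have j2: "2*j \<le> m + 1" "4 * j \<ge> 2*m + 1" unfolding j_def using modd by (auto elim!: oddE)
  have "(1 + t) ^ (m + 1) \<ge> (1 + t) ^ (2*j)"
    by (rule power_increasing) (use j2 t0 in auto)
  moreover have "(1 + t) ^ (2*j) = ((1+t)^j)^2" by (simp add: power_mult mult.commute)
  moreover have B: "(1+t)^j \<ge> 1 + real j * t" using Bernoulli_inequality[of t j] t0 by simp
  moreover have jt: "real j * t \<ge> real K / 4"
  proof -
    have r: "real (2*m+1) \<le> 4 * real j"
    proof -
      have "real (2*m+1) \<le> real (4*j)" using j2(2) by (simp only: of_nat_le_iff)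
      thus ?thesis by simp
    qed
    have pos: "real (2*m+1) > 0" by simp
    have "real K * real (2*m+1) \<le> real K * (4 * real j)"
      by (rule mult_left_mono) (use r in auto)
    hence "real K / 4 \<le> real K * real j / real (2*m+1)"
      using pos by (simp add: field_simps)
    thus ?thesis unfolding t_def by (simp add: mult.commute)
  qed
  ultimately have P: "(1 + t) ^ (m + 1) \<ge> (1 + real K / 4)^2"
  proof -
    have A: "1 + real K / 4 \<le> (1+t)^j" using B jt by linarith
    have "(1 + real K / 4)^2 \<le> ((1+t)^j)^2"
      by (rule power_mono) (use A in auto)
    thus ?thesis using \<open>(1 + t) ^ (m + 1) \<ge> (1 + t) ^ (2*j)\<close> \<open>(1 + t) ^ (2*j) = ((1+t)^j)^2\<close> by linarith
  qed
  have Q: "(1 + real K / 4)^2 > real N"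
  proof -
    have "real K \<ge> 26" using NK N27 by simp
    hence "(1 + real K / 4)^2 > real K + 1"
      by (simp add: power2_eq_square field_simps)
    thus ?thesis using NK by simp
  qed
  have C0: "real ((m + K) choose K) > 0" by simp
  have S: "real ((m + K) choose K) * real N < real ((m + K) choose K) * (1 + t) ^ (m + 1)"
    using P Q C0 by (intro mult_strict_left_mono) auto
  have R: "real ((m + K) choose K) * real N < real ((2*m + 1 + K) choose K)" using S G by linarith
  have Npos: "real N > 0" using N27 by simp
  have "real ((m + K) choose K) < real ((2*m + 1 + K) choose K) / real N"
    using R Npos by (simp add: field_simps)
  hence fin: "real ((N - (k + 1) div 2) choose m) + real ((N - (k + 2) div 2) choose m)
      < real ((2*m + 1 + K) choose K) / real N"
    using L by linarith
  have rn: "(1 / real n ^ 3) * real ((n^3 + 6*n^2 - 6*n + 2) choose (n^3 - 1))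
      = real ((2*m + 1 + K) choose K) / real N"
  proof -
    have h: "\<And>a x. 1 / a * x = x / (a::real)" by simp
    show ?thesis unfolding rhs_arg K_def N_def of_nat_power h by (rule refl)
  qed
  have l1: "n^3 - ((n-1)^3 + 1) div 2 = N - (k + 1) div 2" "n^3 - ((n-1)^3 + 2) div 2 = N - (k + 2) div 2"
    unfolding N_def k_def by (rule refl)+
  have l2: "3*n^2 - 3*n + 1 = m" unfolding m_def by (rule refl)
  show ?thesis unfolding rn l1 l2 by (rule fin)
qed

end
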